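(* Let $X$ be a compact metric space with metric $d$ and let $f\colon X\to X$ be a continuous map. If $f$ has the contractive shadowing property, then $f$ has the h-shadowing property.
   Context: For $\delta>0$, a sequence $(x_i)_{i\ge0}$ in $X$ is a $\delta$-pseudo orbit of $f$ if $d(f(x_i),x_{i+1})\le\delta$ for all $i\ge0$; it is $\epsilon$-shadowed by $x\in X$ if $d(f^i(x),x_i)\le\epsilon$ for all $i\ge0$. For $L>0$, $f$ has the $L$-Lipschitz shadowing property if there is $\delta_0>0$ such that for every $0<\delta\le\delta_0$, every $\delta$-pseudo orbit of $f$ is $L\delta$-shadowed by some point of $X$. $f$ has the contractive shadowing property if it has the $L$-Lipschitz shadowing property for some $0<L<1$. A finite sequence $(x_i)_{i=0}^k$ ($k\ge1$) is a $\delta$-chain of $f$ if $d(f(x_i),x_{i+1})\le\delta$ for $0\le i\le k-1$. $f$ has the h-shadowing property if for every $\epsilon>0$ there is $\delta>0$ such that for every $\delta$-chain $(x_i)_{i=0}^k$ of $f$ there is $x\in X$ with $d(f^i(x),x_i)\le\epsilon$ for all $0\le i\le k-1$ and $f^k(x)=x_k$. *)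

theory Defs
  imports "HOL-Analysis.Analysis"
begin

text \<open>Dynamics of a map f on a subset X of a metric space (X with the induced metric).\<close>

definition pseudo_orbit :: "'a::metric_space set \<Rightarrow> ('a \<Rightarrow> 'a) \<Rightarrow> real \<Rightarrow> (nat \<Rightarrow> 'a) \<Rightarrow> bool" where
  "pseudo_orbit X f \<delta> xs \<longleftrightarrow> (\<forall>i. xs i \<in> X) \<and> (\<forall>i. dist (f (xs i)) (xs (Suc i)) \<le> \<delta>)"

definition shadows :: "('a::metric_space \<Rightarrow> 'a) \<Rightarrow> real \<Rightarrow> 'a \<Rightarrow> (nat \<Rightarrow> 'a) \<Rightarrow> bool" where
  "shadows f \<epsilon> x xs \<longleftrightarrow> (\<forall>i. dist ((f ^^ i) x) (xs i) \<le> \<epsilon>)"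

definition lipschitz_shadowing :: "'a::metric_space set \<Rightarrow> ('a \<Rightarrow> 'a) \<Rightarrow> real \<Rightarrow> bool" where
  "lipschitz_shadowing X f L \<longleftrightarrow>
     (\<exists>\<delta>0>0. \<forall>\<delta>. 0 < \<delta> \<and> \<delta> \<le> \<delta>0 \<longrightarrow>
        (\<forall>xs. pseudo_orbit X f \<delta> xs \<longrightarrow> (\<exists>x\<in>X. shadows f (L * \<delta>) x xs)))"

definition contractive_shadowing :: "'a::metric_space set \<Rightarrow> ('a \<Rightarrow> 'a) \<Rightarrow> bool" where
  "contractive_shadowing X f \<longleftrightarrow> (\<exists>L. 0 < L \<and> L < 1 \<and> lipschitz_shadowing X f L)"

definition delta_chain :: "'a::metric_space set \<Rightarrow> ('a \<Rightarrow> 'a) \<Rightarrow> real \<Rightarrow> nat \<Rightarrow> (nat \<Rightarrow> 'a) \<Rightarrow> bool" where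
  "delta_chain X f \<delta> k xs \<longleftrightarrow> 1 \<le> k \<and> (\<forall>i\<le>k. xs i \<in> X) \<and>
     (\<forall>i<k. dist (f (xs i)) (xs (Suc i)) \<le> \<delta>)"

definition h_shadowing :: "'a::metric_space set \<Rightarrow> ('a \<Rightarrow> 'a) \<Rightarrow> bool" where
  "h_shadowing X f \<longleftrightarrow>
     (\<forall>\<epsilon>>0. \<exists>\<delta>>0. \<forall>k xs. delta_chain X f \<delta> k xs \<longrightarrow>
        (\<exists>x\<in>X. (\<forall>i<k. dist ((f ^^ i) x) (xs i) \<le> \<epsilon>) \<and> (f ^^ k) x = xs k))"

end

theory Submission
  imports Defs
begin

lemma funpow_in:
  assumes "f ` X \<subseteq> X" "y \<in> X" shows "(f ^^ n) y \<in> X"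
  using assms by (induction n) auto

lemma funpow_cont:
  assumes "continuous_on X f" "f ` X \<subseteq> X" shows "continuous_on X (f ^^ n)"
proof (induction n)
  case 0 then show ?case by (simp add: continuous_on_id)
next
  case (Suc n)
  have "(f ^^ Suc n) = f \<circ> (f ^^ n)" by simp
  moreover have "(f ^^ n) ` X \<subseteq> X" using funpow_in[OF assms(2)] by blast
  ultimately show ?case
    using continuous_on_compose[OF Suc] continuous_on_subset[OF assms(1)] by metis
qed

theorem theorem1p1:
  fixes X :: "'a::metric_space set" and f :: "'a \<Rightarrow> 'a"
  assumes "compact X"
    and "continuous_on X f"
    and "f ` X \<subseteq> X"
    and "contractive_shadowing X f"
  shows "h_shadowing X f"
proof -
  obtain L \<delta>0 where L: "0 < L" "L < 1" and d0: "\<delta>0 > 0"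
    and sh: "\<And>\<delta> xs. 0 < \<delta> \<Longrightarrow> \<delta> \<le> \<delta>0 \<Longrightarrow> pseudo_orbit X f \<delta> xs \<Longrightarrow>
               \<exists>x\<in>X. shadows f (L * \<delta>) x xs"
    using assms(4) unfolding contractive_shadowing_def lipschitz_shadowing_def by blast
  have inX: "\<And>n y. y \<in> X \<Longrightarrow> (f ^^ n) y \<in> X" using funpow_in[OF assms(3)] .
  have cf: "\<And>n. continuous_on X (f ^^ n)" using funpow_cont[OF assms(2,3)] .
  define a where "a = L / (1 - L)"
  have a0: "a \<ge> 0" using L by (simp add: a_def)
  have aL: "L + a * L = a" using L by (simp add: a_def field_simps)
  show ?thesis unfolding h_shadowing_def
  proof (intro allI impI)
    fix \<epsilon> :: real assume e: "\<epsilon> > 0"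
    define \<delta> where "\<delta> = min \<delta>0 (\<epsilon> * (1 - L))"
    have dpos: "\<delta> > 0" using e L d0 by (simp add: \<delta>_def)
    define c where "c = L * \<delta> + a * (L * \<delta>)"
    have ce: "c \<le> \<epsilon>"
    proof -
      have "c = (L + a * L) * \<delta>" by (simp add: c_def algebra_simps)
      also have "\<dots> = a * \<delta>" using aL by simp
      finally have "c = a * \<delta>" .
      then have "c = a * \<delta>" .
      also have "\<dots> \<le> a * (\<epsilon> * (1 - L))" using a0 by (intro mult_left_mono) (auto simp: \<delta>_def)
      also have "\<dots> = L * \<epsilon>" using L by (simp add: a_def)
      also have "\<dots> \<le> \<epsilon>" using L e by simp
      finally show ?thesis .
    qed
    show "\<exists>\<delta>>0. \<forall>k xs. delta_chain X f \<delta> k xs \<longrightarrow>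
        (\<exists>x\<in>X. (\<forall>i<k. dist ((f ^^ i) x) (xs i) \<le> \<epsilon>) \<and> (f ^^ k) x = xs k)"
    proof (intro exI conjI allI impI)
      show "\<delta> > 0" by (rule dpos)
      fix k xs assume ch: "delta_chain X f \<delta> k xs"
      have xsX: "\<And>i. i \<le> k \<Longrightarrow> xs i \<in> X" and xsd: "\<And>i. i < k \<Longrightarrow> dist (f (xs i)) (xs (Suc i)) \<le> \<delta>"
        using ch unfolding delta_chain_def by auto
      define zs where "zs i = (if i \<le> k then xs i else (f ^^ (i - k)) (xs k))" for i
      have "pseudo_orbit X f \<delta> zs"
        unfolding pseudo_orbit_def
      proof (intro conjI allI)
        fix i show "zs i \<in> X" using xsX inX by (simp add: zs_def)
        show "dist (f (zs i)) (zs (Suc i)) \<le> \<delta>"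
        proof (cases "i < k")
          case True then show ?thesis using xsd by (simp add: zs_def)
        next
          case False
          then have "Suc i - k = Suc (i - k)" by simp
          then have "f (zs i) = zs (Suc i)" using False
            by (cases "i = k") (auto simp: zs_def)
          then show ?thesis using dpos by simp
        qed
      qed
      then obtain y0 where y0X: "y0 \<in> X" and y0: "\<And>i. dist ((f ^^ i) y0) (zs i) \<le> L * \<delta>"
        using sh[OF dpos] by (auto simp: \<delta>_def shadows_def)
      define g where "g y = dist ((f ^^ k) y) (xs k)" for y
      define F where "F i y = (if i < k then dist ((f ^^ i) y) (xs i) else 0) + a * g y" for i y
      define K where "K = (\<Inter>i\<in>{..k}. X \<inter> F i -` {..c})"
      have gc: "continuous_on X g" unfolding g_def
        by (intro continuous_on_dist cf continuous_on_const)
      have Fc: "continuous_on X (F i)" for i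
      proof (cases "i < k")
        case True
        then have "F i = (\<lambda>y. dist ((f ^^ i) y) (xs i) + a * g y)" by (auto simp: F_def)
        then show ?thesis by (simp only:) (intro gc cf continuous_on_add continuous_on_dist continuous_on_const continuous_on_mult)
      next
        case False
        then have "F i = (\<lambda>y. 0 + a * g y)" by (auto simp: F_def)
        then show ?thesis by (simp only:) (intro gc continuous_on_add continuous_on_const continuous_on_mult)
      qed
      have "closedin (top_of_set X) K" unfolding K_def
        by (intro closedin_INT) (auto intro: continuous_closedin_preimage[OF Fc])
      then have Kc: "compact K" using closedin_compact[OF assms(1)] by blast
      have KX: "K \<subseteq> X" by (auto simp: K_def)
      have memK: "y \<in> K \<longleftrightarrow> y \<in> X \<and> (\<forall>i\<le>k. F i y \<le> c)" for y
        by (auto simp: K_def)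
      have gy0: "g y0 \<le> L * \<delta>" using y0[of k] by (simp add: g_def zs_def)
      have "y0 \<in> K" unfolding memK
      proof (intro conjI allI impI y0X)
        fix i assume "i \<le> k"
        have "(if i < k then dist ((f ^^ i) y0) (xs i) else 0) \<le> L * \<delta>"
          using y0[of i] \<open>i \<le> k\<close> L dpos by (auto simp: zs_def)
        moreover have "a * g y0 \<le> a * (L * \<delta>)" using gy0 a0 by (rule mult_left_mono)
        ultimately show "F i y0 \<le> c" by (simp add: F_def c_def)
      qed
      then have "K \<noteq> {}" by blast
      from continuous_attains_inf[OF Kc this continuous_on_subset[OF gc KX]]
      obtain y where yK: "y \<in> K" and ymin: "\<And>z. z \<in> K \<Longrightarrow> g y \<le> g z" by blast
      have yX: "y \<in> X" using yK KX by blast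
      have g0: "g y = 0"
      proof (rule ccontr)
        assume "g y \<noteq> 0"
        then have mpos: "g y > 0" by (simp add: g_def)
        have "g y \<le> \<delta>0" using ymin[OF \<open>y0 \<in> K\<close>] gy0 L dpos
          by (smt (verit) \<delta>_def mult_le_cancel_right1)
        define ws where "ws i = (if i < k then (f ^^ i) y else (f ^^ (i - k)) (xs k))" for i
        have "pseudo_orbit X f (g y) ws"
          unfolding pseudo_orbit_def
        proof (intro conjI allI)
          fix i show "ws i \<in> X" using xsX inX yX by (simp add: ws_def)
          show "dist (f (ws i)) (ws (Suc i)) \<le> g y"
          proof (cases "Suc i < k")
            case True then show ?thesis using mpos by (simp add: ws_def)
          next
            case False
            show ?thesis
            proof (cases "Suc i = k")
              case True then show ?thesis by (auto simp: ws_def g_def)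
            next
              case F2: False
              with False have "Suc i - k = Suc (i - k)" "\<not> i < k" by auto
              then have "f (ws i) = ws (Suc i)" using False by (simp add: ws_def)
              then show ?thesis using mpos by simp
            qed
          qed
        qed
        then obtain y' where y'X: "y' \<in> X" and y': "\<And>i. dist ((f ^^ i) y') (ws i) \<le> L * g y"
          using sh[OF mpos \<open>g y \<le> \<delta>0\<close>] by (auto simp: shadows_def)
        have gy': "g y' \<le> L * g y" using y'[of k] by (simp add: g_def ws_def)
        have "y' \<in> K" unfolding memK
        proof (intro conjI allI impI y'X)
          fix i assume "i \<le> k"
          have Fy: "F i y \<le> c" using yK \<open>i \<le> k\<close> memK by blast
          have ag: "a * g y' \<le> a * (L * g y)" using gy' a0 by (rule mult_left_mono)
          show "F i y' \<le> c"
          proof (cases "i < k")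
            case True
            have "dist ((f ^^ i) y') (xs i) \<le> dist ((f ^^ i) y') ((f ^^ i) y) + dist ((f ^^ i) y) (xs i)"
              by (rule dist_triangle)
            also have "\<dots> \<le> L * g y + dist ((f ^^ i) y) (xs i)"
              using y'[of i] True by (simp add: ws_def)
            finally have "F i y' \<le> L * g y + a * (L * g y) + dist ((f ^^ i) y) (xs i)"
              using ag True by (simp add: F_def)
            also have "\<dots> = a * g y + dist ((f ^^ i) y) (xs i)"
              using aL by (metis distrib_right mult.assoc mult.commute)
            also have "\<dots> = F i y" using True by (simp add: F_def)
            finally show ?thesis using Fy by simp
          next
            case False
            have "a * (L * g y) \<le> a * g y" using a0 L mpos by (simp add: mult_left_mono)
            then show ?thesis using Fy ag False by (simp add: F_def)
          qed
        qed
        then have "g y \<le> g y'" by (rule ymin)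
        moreover have "L * g y < 1 * g y" using mpos L by (intro mult_strict_right_mono) auto
        ultimately show False using gy' by linarith
      qed
      show "\<exists>x\<in>X. (\<forall>i<k. dist ((f ^^ i) x) (xs i) \<le> \<epsilon>) \<and> (f ^^ k) x = xs k"
      proof (intro bexI conjI allI impI yX)
        show "(f ^^ k) y = xs k" using g0 by (simp add: g_def)
        fix i assume "i < k"
        then have "F i y \<le> c" using yK memK by auto
        then show "dist ((f ^^ i) y) (xs i) \<le> \<epsilon>" using g0 \<open>i < k\<close> ce by (simp add: F_def)
      qed (rule yX)
    qed
  qed
qed

end
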